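(* Let $G=(V,E,w)$ be a finite connected weighted simple graph, regarded as a hypergraph all of whose hyperedges have exactly two elements (with hyperedge weights $w_{\{x,y\}}=w(x,y)$). Then for all $x,y\in V$ with $x\ne y$, $\underline\kappa(x,y)=\overline\kappa(x,y)$, and the common value $\kappa(x,y)$ equals the Lin–Lu–Yau curvature $\kappa^{\mathrm{LLY}}(x,y)$.
   Context: Graph setting: $V$ finite, $E$ a set of 2-element subsets of $V$, $w\colon V\times V\to\mathbb{R}_{\ge0}$ symmetric with $w(x,y)>0$ iff $\{x,y\}\in E$ (written $x\sim y$); $G$ connected. Degree $d_x=\sum_y w(x,y)$, $D=\mathrm{diag}(d_x)$; $d(x,y)$ is the graph (path-length) distance. For $0<\alpha<1$ and $x\in V$ let $m_x^\alpha$ be the probability measure $m_x^\alpha(x)=\alpha$, $m_x^\alpha(y)=\frac{1-\alpha}{d_x}w(x,y)$ for $y\sim x$, and $0$ otherwise. $W_1$ is the $L^1$-Wasserstein distance on probability measures on $(V,d)$. $\kappa^\alpha(x,y)=1-W_1(m_x^\alpha,m_y^\alpha)/d(x,y)$ and $\kappa^{\mathrm{LLY}}(x,y)=\lim_{\alpha\uparrow1}\kappa^\alpha(x,y)/(1-\alpha)$ (this limit exists by Lin–Lu–Yau). Hypergraph notions: $\delta_x$ is the indicator of $x$; $\mathbb{R}^V$ carries the inner product $\langle f,g\rangle=\sum_x f(x)g(x)/d_x$ with norm $\|\cdot\|$. For a hyperedge $e$, $B_e=\mathrm{Conv}\{\delta_x-\delta_y : x,y\in e\}$; the hypergraph Laplacian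 is $L(f)=\{\sum_{e}w_e\mathtt{b}_e(\mathtt{b}_e^\top f) : \mathtt{b}_e\in\operatorname{argmax}_{\mathtt b\in B_e}\mathtt b^\top f\}$ (for a graph this is the single matrix $D-A$, $A=(w(x,y))$), and the normalized Laplacian is $\mathcal{L}f=L(D^{-1}f)$. For $\lambda>0$ the resolvent is $J_\lambda=(I+\lambda\mathcal L)^{-1}$. A function $f$ is weighted $1$-Lipschitz if $|f(x)/d_x-f(y)/d_y|\le d(x,y)$ for all $x,y$; $\mathrm{Lip}^1_w(V)$ denotes the set of such functions. $\mathrm{KD}_\lambda(x,y)=\sup\{\langle J_\lambda f,\delta_x-\delta_y\rangle : f\in\mathrm{Lip}^1_w(V)\}$. For $x\ne y$: $\kappa_\lambda(x,y)=1-\mathrm{KD}_\lambda(x,y)/d(x,y)$, $\underline\kappa(x,y)=\liminf_{\lambda\downarrow0}\kappa_\lambda(x,y)/\lambda$, $\overline\kappa(x,y)=\limsup_{\lambda\downarrow0}\kappa_\lambda(x,y)/\lambda$. *)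

theory Defs
  imports "HOL-Analysis.Analysis"
begin

(* Vertex set V = UNIV of a finite type 'a.  Weights w :: 'a => 'a => real. *)

definition weighted_simple_graph :: "('a::finite \<Rightarrow> 'a \<Rightarrow> real) \<Rightarrow> bool" where
  "weighted_simple_graph w \<longleftrightarrow>
     (\<forall>x y. w x y = w y x) \<and> (\<forall>x y. 0 \<le> w x y) \<and> (\<forall>x. w x x = 0)"

definition adj :: "('a \<Rightarrow> 'a \<Rightarrow> real) \<Rightarrow> 'a \<Rightarrow> 'a \<Rightarrow> bool" where
  "adj w x y \<longleftrightarrow> 0 < w x y"

inductive walk :: "('a \<Rightarrow> 'a \<Rightarrow> real) \<Rightarrow> nat \<Rightarrow> 'a \<Rightarrow> 'a \<Rightarrow> bool" for w where
  walk_nil: "walk w 0 x x"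
| walk_cons: "adj w x z \<Longrightarrow> walk w n z y \<Longrightarrow> walk w (Suc n) x y"

definition connected_graph :: "('a \<Rightarrow> 'a \<Rightarrow> real) \<Rightarrow> bool" where
  "connected_graph w \<longleftrightarrow> (\<forall>x y. \<exists>n. walk w n x y)"

definition gdist :: "('a \<Rightarrow> 'a \<Rightarrow> real) \<Rightarrow> 'a \<Rightarrow> 'a \<Rightarrow> real" where
  "gdist w x y = real (LEAST n. walk w n x y)"

definition deg :: "('a::finite \<Rightarrow> 'a \<Rightarrow> real) \<Rightarrow> 'a \<Rightarrow> real" where
  "deg w x = (\<Sum>y\<in>UNIV. w x y)"

definition mlazy :: "('a::finite \<Rightarrow> 'a \<Rightarrow> real) \<Rightarrow> real \<Rightarrow> 'a \<Rightarrow> 'a \<Rightarrow> real" where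
  "mlazy w \<alpha> x z = (if z = x then \<alpha> else (1 - \<alpha>) / deg w x * w x z)"

definition couplings :: "('a::finite \<Rightarrow> real) \<Rightarrow> ('a \<Rightarrow> real) \<Rightarrow> ('a \<Rightarrow> 'a \<Rightarrow> real) set" where
  "couplings \<mu> \<nu> = {\<pi>. (\<forall>u v. 0 \<le> \<pi> u v) \<and> (\<forall>u. (\<Sum>v\<in>UNIV. \<pi> u v) = \<mu> u)
                          \<and> (\<forall>v. (\<Sum>u\<in>UNIV. \<pi> u v) = \<nu> v)}"

definition W1 :: "('a::finite \<Rightarrow> 'a \<Rightarrow> real) \<Rightarrow> ('a \<Rightarrow> real) \<Rightarrow> ('a \<Rightarrow> real) \<Rightarrow> real" where
  "W1 w \<mu> \<nu> = Inf ((\<lambda>\<pi>. \<Sum>u\<in>UNIV. \<Sum>v\<in>UNIV. \<pi> u v * gdist w u v) ` couplings \<mu> \<nu>)"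

definition kappa_alpha :: "('a::finite \<Rightarrow> 'a \<Rightarrow> real) \<Rightarrow> real \<Rightarrow> 'a \<Rightarrow> 'a \<Rightarrow> real" where
  "kappa_alpha w \<alpha> x y = 1 - W1 w (mlazy w \<alpha> x) (mlazy w \<alpha> y) / gdist w x y"

(* Lin-Lu-Yau curvature: the limit alpha -> 1^- of kappa^alpha/(1-alpha)
   (the limit exists by Lin-Lu-Yau) *)
definition kappa_LLY :: "('a::finite \<Rightarrow> 'a \<Rightarrow> real) \<Rightarrow> 'a \<Rightarrow> 'a \<Rightarrow> real" where
  "kappa_LLY w x y = Lim (at_left 1) (\<lambda>\<alpha>. kappa_alpha w \<alpha> x y / (1 - \<alpha>))"

definition indic :: "'a \<Rightarrow> 'a \<Rightarrow> real" ("\<delta>") where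
  "indic x = (\<lambda>z. if z = x then 1 else 0)"

definition winner :: "('a::finite \<Rightarrow> real) \<Rightarrow> ('a \<Rightarrow> real) \<Rightarrow> ('a \<Rightarrow> real) \<Rightarrow> real" where
  "winner d f g = (\<Sum>x\<in>UNIV. f x * g x / d x)"

definition dotp :: "('a::finite \<Rightarrow> real) \<Rightarrow> ('a \<Rightarrow> real) \<Rightarrow> real" where
  "dotp b f = (\<Sum>x\<in>UNIV. b x * f x)"

(* B_e = Conv { delta_x - delta_y : x, y in e }, written as the set of convex
   combinations of the (finitely many) generators *)
definition Bset :: "'a::finite set \<Rightarrow> ('a \<Rightarrow> real) set" where
  "Bset e = {b. \<exists>c. (\<forall>p q. 0 \<le> c p q) \<and> (\<Sum>p\<in>e. \<Sum>q\<in>e. c p q) = 1 \<and>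
                  b = (\<lambda>z. \<Sum>p\<in>e. \<Sum>q\<in>e. c p q * (\<delta> p z - \<delta> q z))}"

definition hyp_laplacian :: "'a set set \<Rightarrow> ('a set \<Rightarrow> real) \<Rightarrow> ('a::finite \<Rightarrow> real) \<Rightarrow> ('a \<Rightarrow> real) set" where
  "hyp_laplacian H we f =
     {g. \<exists>b. (\<forall>e\<in>H. b e \<in> Bset e \<and> (\<forall>b'\<in>Bset e. dotp b' f \<le> dotp (b e) f)) \<and>
            g = (\<lambda>z. \<Sum>e\<in>H. we e * b e z * dotp (b e) f)}"

definition norm_laplacian :: "'a set set \<Rightarrow> ('a set \<Rightarrow> real) \<Rightarrow> ('a \<Rightarrow> real) \<Rightarrow> ('a::finite \<Rightarrow> real) \<Rightarrow> ('a \<Rightarrow> real) set" where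
  "norm_laplacian H we d f = hyp_laplacian H we (\<lambda>x. f x / d x)"

(* resolvent J_lambda = (I + lambda \<L>)^{-1}:  J_lambda f is the u with f \<in> u + lambda \<L> u *)
definition resolvent :: "'a set set \<Rightarrow> ('a set \<Rightarrow> real) \<Rightarrow> ('a \<Rightarrow> real) \<Rightarrow> real \<Rightarrow> ('a::finite \<Rightarrow> real) \<Rightarrow> ('a \<Rightarrow> real)" where
  "resolvent H we d lam f = (THE u. \<exists>g\<in>norm_laplacian H we d u. f = (\<lambda>z. u z + lam * g z))"

definition Lip1w :: "('a::finite \<Rightarrow> 'a \<Rightarrow> real) \<Rightarrow> ('a \<Rightarrow> real) set" where
  "Lip1w w = {f. \<forall>x y. \<bar>f x / deg w x - f y / deg w y\<bar> \<le> gdist w x y}"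

definition graph_hyperedges :: "('a \<Rightarrow> 'a \<Rightarrow> real) \<Rightarrow> 'a set set" where
  "graph_hyperedges w = {{x, y} | x y. adj w x y}"

definition graph_hweight :: "('a \<Rightarrow> 'a \<Rightarrow> real) \<Rightarrow> 'a set \<Rightarrow> real" where
  "graph_hweight w e = (SOME c. \<exists>x y. e = {x, y} \<and> x \<noteq> y \<and> c = w x y)"

definition graph_resolvent :: "('a::finite \<Rightarrow> 'a \<Rightarrow> real) \<Rightarrow> real \<Rightarrow> ('a \<Rightarrow> real) \<Rightarrow> ('a \<Rightarrow> real)" where
  "graph_resolvent w lam = resolvent (graph_hyperedges w) (graph_hweight w) (deg w) lam"

definition KD :: "('a::finite \<Rightarrow> 'a \<Rightarrow> real) \<Rightarrow> real \<Rightarrow> 'a \<Rightarrow> 'a \<Rightarrow> real" where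
  "KD w lam x y = Sup ((\<lambda>f. winner (deg w) (graph_resolvent w lam f) (\<delta> x - \<delta> y)) ` Lip1w w)"

definition kappa_lambda :: "('a::finite \<Rightarrow> 'a \<Rightarrow> real) \<Rightarrow> real \<Rightarrow> 'a \<Rightarrow> 'a \<Rightarrow> real" where
  "kappa_lambda w lam x y = 1 - KD w lam x y / gdist w x y"

definition kappa_lower :: "('a::finite \<Rightarrow> 'a \<Rightarrow> real) \<Rightarrow> 'a \<Rightarrow> 'a \<Rightarrow> ereal" where
  "kappa_lower w x y = Liminf (at_right 0) (\<lambda>lam. ereal (kappa_lambda w lam x y / lam))"

definition kappa_upper :: "('a::finite \<Rightarrow> 'a \<Rightarrow> real) \<Rightarrow> 'a \<Rightarrow> 'a \<Rightarrow> ereal" where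
  "kappa_upper w x y = Limsup (at_right 0) (\<lambda>lam. ereal (kappa_lambda w lam x y / lam))"

end

theory Submission
  imports Defs "HOL-Analysis.Analysis"
begin

lemma walk_trans: "walk w n a b \<Longrightarrow> walk w m b c \<Longrightarrow> walk w (n+m) a c"
  by (induction rule: walk.induct) (auto intro: walk.intros)

lemma walk_snoc: "walk w n a b \<Longrightarrow> adj w b c \<Longrightarrow> walk w (Suc n) a c"
  by (induction rule: walk.induct) (auto intro: walk.intros)

lemma walk_0: "walk w 0 a b \<Longrightarrow> a = b"
  by (auto elim: walk.cases)

locale wgraph =
  fixes w :: "'a::finite \<Rightarrow> 'a \<Rightarrow> real"
  assumes wsg: "weighted_simple_graph w" and conn: "connected_graph w"
    and two: "\<exists>a b::'a. a \<noteq> b"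
begin

lemma wsym: "w a b = w b a" and wnn: "0 \<le> w a b" and wdiag: "w a a = 0"
  using wsg unfolding weighted_simple_graph_def by auto

lemma adj_sym: "adj w a b \<Longrightarrow> adj w b a"
  unfolding adj_def using wsym by simp

lemma walk_rev: "walk w n a b \<Longrightarrow> walk w n b a"
proof (induction rule: walk.induct)
  case (walk_nil x) then show ?case by (rule walk.intros)
next
  case (walk_cons x z n y)
  then show ?case by (intro walk_snoc[of w n y z x]) (auto intro: adj_sym)
qed

lemma ex_walk: "\<exists>n. walk w n a b" using conn unfolding connected_graph_def by blast

lemma gdist_walk: "walk w (nat (floor (gdist w a b))) a b"
  unfolding gdist_def using LeastI_ex[OF ex_walk] by simp

lemma gdist_le: "walk w n a b \<Longrightarrow> gdist w a b \<le> n"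
  unfolding gdist_def by (simp add: Least_le)

lemma gdist_nn: "0 \<le> gdist w a b" unfolding gdist_def by simp

lemma gdist_refl: "gdist w a a = 0"
  using gdist_le[OF walk_nil, of a] gdist_nn[of a a] by simp

lemma gdist_sym: "gdist w a b = gdist w b a"
proof -
  have "(\<lambda>n. walk w n a b) = (\<lambda>n. walk w n b a)" using walk_rev by (intro ext iffI) auto
  then show ?thesis unfolding gdist_def by simp
qed

lemma gdist_nat: "gdist w a b = real (nat (floor (gdist w a b)))"
  unfolding gdist_def by simp

lemma gdist_tri: "gdist w a c \<le> gdist w a b + gdist w b c"
proof -
  have "walk w (nat (floor (gdist w a b)) + nat (floor (gdist w b c))) a c"
    using walk_trans[OF gdist_walk gdist_walk] .
  from gdist_le[OF this] have "gdist w a c \<le> real (nat (floor (gdist w a b))) + real (nat (floor (gdist w b c)))" by simp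
  then show ?thesis using gdist_nat[of a b] gdist_nat[of b c] by linarith
qed

lemma gdist_pos: "a \<noteq> b \<Longrightarrow> 1 \<le> gdist w a b"
proof -
  assume ab: "a \<noteq> b"
  have "nat (floor (gdist w a b)) \<noteq> 0"
  proof
    assume h: "nat (floor (gdist w a b)) = 0"
    have "walk w (nat (floor (gdist w a b))) a b" by (rule gdist_walk)
    then have "walk w 0 a b" unfolding h .
    then have "a = b" by (rule walk_0)
    with ab show False by simp
  qed
  then show ?thesis using gdist_nat[of a b] by linarith
qed

lemma deg_pos: "0 < deg w a"
proof -
  obtain a1 b1 :: 'a where "a1 \<noteq> b1" using two by blast
  then have "\<exists>b. b \<noteq> a" by (cases "a1 = a") auto
  then obtain b where ab: "b \<noteq> a" by blast
  obtain n where "walk w n a b" using ex_walk by blast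
  then obtain z where "adj w a z"
  proof (cases rule: walk.cases)
    case walk_nil then show ?thesis using ab by simp
  qed
  then have "0 < w a z" unfolding adj_def .
  also have "w a z \<le> deg w a" unfolding deg_def
    by (rule member_le_sum) (auto simp: wnn)
  finally show ?thesis .
qed

end

definition Lip1 :: "('a::finite \<Rightarrow> 'a \<Rightarrow> real) \<Rightarrow> ('a \<Rightarrow> real) set" where
  "Lip1 w = {g. \<forall>u v. \<bar>g u - g v\<bar> \<le> gdist w u v}"

definition tcost :: "('a::finite \<Rightarrow> 'a \<Rightarrow> real) \<Rightarrow> ('a \<Rightarrow> 'a \<Rightarrow> real) \<Rightarrow> real" where
  "tcost w \<pi> = (\<Sum>u\<in>UNIV. \<Sum>v\<in>UNIV. \<pi> u v * gdist w u v)"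

definition pairing :: "('a::finite \<Rightarrow> real) \<Rightarrow> ('a \<Rightarrow> real) \<Rightarrow> ('a \<Rightarrow> real) \<Rightarrow> real" where
  "pairing g \<mu> \<nu> = (\<Sum>z\<in>UNIV. g z * (\<mu> z - \<nu> z))"

lemma W1_tcost: "W1 w \<mu> \<nu> = Inf (tcost w ` couplings \<mu> \<nu>)"
  unfolding W1_def tcost_def by simp

context wgraph begin

lemma weak_duality:
  assumes "\<pi> \<in> couplings \<mu> \<nu>" "g \<in> Lip1 w"
  shows "pairing g \<mu> \<nu> \<le> tcost w \<pi>"
proof -
  have m1: "\<And>u. (\<Sum>v\<in>UNIV. \<pi> u v) = \<mu> u" and m2: "\<And>v. (\<Sum>u\<in>UNIV. \<pi> u v) = \<nu> v"
    and pn: "\<And>u v. 0 \<le> \<pi> u v" using assms(1) unfolding couplings_def by auto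
  have "(\<Sum>z\<in>UNIV. g z * \<mu> z) = (\<Sum>u\<in>UNIV. \<Sum>v\<in>UNIV. \<pi> u v * g u)"
    unfolding m1[symmetric] sum_distrib_left by (intro sum.cong refl) (simp add: mult.commute)
  moreover have "(\<Sum>z\<in>UNIV. g z * \<nu> z) = (\<Sum>v\<in>UNIV. \<Sum>u\<in>UNIV. \<pi> u v * g v)"
    unfolding m2[symmetric] sum_distrib_left by (intro sum.cong refl) (simp add: mult.commute)
  moreover have "(\<Sum>v\<in>UNIV. \<Sum>u\<in>UNIV. \<pi> u v * g v) = (\<Sum>u\<in>UNIV. \<Sum>v\<in>UNIV. \<pi> u v * g v)"
    by (rule sum.swap)
  ultimately have "pairing g \<mu> \<nu> = (\<Sum>u\<in>UNIV. \<Sum>v\<in>UNIV. \<pi> u v * (g u - g v))"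
    unfolding pairing_def right_diff_distrib sum_subtractf by simp
  also have "\<dots> \<le> tcost w \<pi>" unfolding tcost_def
  proof (intro sum_mono)
    fix u v
    have "g u - g v \<le> gdist w u v" using assms(2) unfolding Lip1_def by (metis (mono_tags, lifting) abs_le_D1 mem_Collect_eq)
    then show "\<pi> u v * (g u - g v) \<le> \<pi> u v * gdist w u v"
      using pn[of u v] by (rule mult_left_mono)
  qed
  finally show ?thesis .
qed

lemma prod_coupling:
  assumes "\<And>z. 0 \<le> \<mu> z" "\<And>z. 0 \<le> \<nu> z" "sum \<mu> UNIV = 1" "sum \<nu> UNIV = 1"
  shows "(\<lambda>u v. \<mu> u * \<nu> v) \<in> couplings \<mu> \<nu>"
  using assms unfolding couplings_def by (auto simp: sum_distrib_left[symmetric] sum_distrib_right[symmetric])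

lemma tcost_nn: "(\<And>u v. 0 \<le> \<pi> u v) \<Longrightarrow> 0 \<le> tcost w \<pi>"
  unfolding tcost_def by (intro sum_nonneg mult_nonneg_nonneg gdist_nn) auto

lemma zero_Lip1: "(\<lambda>_. 0) \<in> Lip1 w"
  unfolding Lip1_def using gdist_nn by auto

end

definition vecof :: "('a::finite \<Rightarrow> real) \<Rightarrow> real^'a" where
  "vecof f = (\<chi> z. f z)"

lemma sum_indic_l: fixes u :: "'a::finite" shows "(\<Sum>z\<in>UNIV. \<delta> u z * f z) = (f u :: real)"
  unfolding indic_def by (simp add: if_distrib[where f="\<lambda>x. x * f _"] cong: if_cong)

lemma sum_indic_r: fixes u :: "'a::finite" shows "(\<Sum>z\<in>UNIV. f z * \<delta> u z) = (f u :: real)"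
  unfolding indic_def by (simp add: if_distrib[where f="\<lambda>x. f _ * x"] cong: if_cong)

lemma sum_indic: fixes u :: "'a::finite" shows "(\<Sum>z\<in>UNIV. \<delta> u z) = (1::real)"
  unfolding indic_def by (simp add: sum.delta)

lemma inner_vecof: "inner a (vecof f) = (\<Sum>i\<in>UNIV. a$i * f i)"
  unfolding inner_vec_def vecof_def by simp


context wgraph begin

definition Tset :: "((real^'a) \<times> (real^'a) \<times> real) set" where
  "Tset = {p. \<exists>\<pi>. (\<forall>u v. 0 \<le> \<pi> u v) \<and> fst p = vecof (\<lambda>u. \<Sum>v\<in>UNIV. \<pi> u v)
            \<and> fst (snd p) = vecof (\<lambda>v. \<Sum>u\<in>UNIV. \<pi> u v) \<and> snd (snd p) = tcost w \<pi>}"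

lemma convex_Tset: "convex Tset"
  unfolding convex_def
proof (intro ballI allI impI)
  fix p1 p2 and a b :: real
  assume "p1 \<in> Tset" "p2 \<in> Tset" and ab: "0 \<le> a" "0 \<le> b" "a + b = 1"
  then obtain \<pi>1 \<pi>2 where
    1: "\<forall>u v. 0 \<le> \<pi>1 u v" "fst p1 = vecof (\<lambda>u. \<Sum>v\<in>UNIV. \<pi>1 u v)"
       "fst (snd p1) = vecof (\<lambda>v. \<Sum>u\<in>UNIV. \<pi>1 u v)" "snd (snd p1) = tcost w \<pi>1" and
    2: "\<forall>u v. 0 \<le> \<pi>2 u v" "fst p2 = vecof (\<lambda>u. \<Sum>v\<in>UNIV. \<pi>2 u v)"
       "fst (snd p2) = vecof (\<lambda>v. \<Sum>u\<in>UNIV. \<pi>2 u v)" "snd (snd p2) = tcost w \<pi>2"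
    unfolding Tset_def by blast
  define \<pi> where "\<pi> = (\<lambda>u v. a * \<pi>1 u v + b * \<pi>2 u v)"
  have "\<forall>u v. 0 \<le> \<pi> u v" unfolding \<pi>_def using 1(1) 2(1) ab by simp
  moreover have "fst (a *\<^sub>R p1 + b *\<^sub>R p2) = vecof (\<lambda>u. \<Sum>v\<in>UNIV. \<pi> u v)"
    using 1(2) 2(2) unfolding \<pi>_def vecof_def
    by (simp add: vec_eq_iff sum.distrib sum_distrib_left)
  moreover have "fst (snd (a *\<^sub>R p1 + b *\<^sub>R p2)) = vecof (\<lambda>v. \<Sum>u\<in>UNIV. \<pi> u v)"
    using 1(3) 2(3) unfolding \<pi>_def vecof_def
    by (simp add: vec_eq_iff sum.distrib sum_distrib_left)
  moreover have "snd (snd (a *\<^sub>R p1 + b *\<^sub>R p2)) = tcost w \<pi>"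
    using 1(4) 2(4) unfolding \<pi>_def tcost_def
    by (simp add: sum.distrib sum_distrib_left distrib_right mult.assoc)
  ultimately show "a *\<^sub>R p1 + b *\<^sub>R p2 \<in> Tset" unfolding Tset_def by blast
qed

definition Sgen :: "((real^'a) \<times> (real^'a) \<times> real) set" where
  "Sgen = (\<lambda>(u,v). (vecof (\<delta> u), vecof (\<delta> v), gdist w u v)) ` UNIV"

lemma Sgen_Tset: "Sgen \<subseteq> Tset"
proof
  fix p assume "p \<in> Sgen"
  then obtain u v where p: "p = (vecof (\<delta> u), vecof (\<delta> v), gdist w u v)"
    unfolding Sgen_def by auto
  define \<pi> where "\<pi> = (\<lambda>a b. \<delta> u a * \<delta> v b)"
  have "\<forall>a b. 0 \<le> \<pi> a b" unfolding \<pi>_def indic_def by simp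
  moreover have "fst p = vecof (\<lambda>a. \<Sum>b\<in>UNIV. \<pi> a b)"
    unfolding p \<pi>_def by (simp add: sum_distrib_left[symmetric] sum_indic)
  moreover have "fst (snd p) = vecof (\<lambda>b. \<Sum>a\<in>UNIV. \<pi> a b)"
    unfolding p \<pi>_def by (simp add: sum_distrib_right[symmetric] sum_indic)
  moreover have "snd (snd p) = tcost w \<pi>"
    unfolding p \<pi>_def tcost_def by (simp add: mult.assoc sum_distrib_left[symmetric] sum_indic_l)
  ultimately show "p \<in> Tset" unfolding Tset_def by blast
qed


lemma W1_le_tcost:
  assumes "\<pi> \<in> couplings \<mu> \<nu>"
  shows "W1 w \<mu> \<nu> \<le> tcost w \<pi>"
  unfolding W1_tcost
proof (rule cInf_lower)
  show "tcost w \<pi> \<in> tcost w ` couplings \<mu> \<nu>" using assms by blast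
  show "bdd_below (tcost w ` couplings \<mu> \<nu>)"
    by (rule bdd_belowI[of _ 0]) (auto simp: couplings_def intro!: tcost_nn)
qed

lemma strong_eps:
  assumes mnn: "\<And>z. 0 \<le> \<mu> z" and nnn: "\<And>z. 0 \<le> \<nu> z"
    and ms: "sum \<mu> UNIV = 1" and ns: "sum \<nu> UNIV = 1" and eps: "0 < \<epsilon>"
  shows "\<exists>g\<in>Lip1 w. W1 w \<mu> \<nu> - \<epsilon> < pairing g \<mu> \<nu>"
proof -
  define W where "W = W1 w \<mu> \<nu>"
  define z where "z = (vecof \<mu>, vecof \<nu>, W - \<epsilon>)"
  have notin: "z \<notin> convex hull Sgen"
  proof
    assume "z \<in> convex hull Sgen"
    moreover have "convex hull Sgen \<subseteq> Tset" by (rule hull_minimal[where S=convex, OF Sgen_Tset convex_Tset])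
    ultimately have "z \<in> Tset" by blast
    then obtain \<pi> where pn: "\<forall>u v. 0 \<le> \<pi> u v" and m1: "vecof \<mu> = vecof (\<lambda>u. \<Sum>v\<in>UNIV. \<pi> u v)"
      and m2: "vecof \<nu> = vecof (\<lambda>v. \<Sum>u\<in>UNIV. \<pi> u v)" and c: "W - \<epsilon> = tcost w \<pi>"
      unfolding Tset_def z_def by auto
    have "\<pi> \<in> couplings \<mu> \<nu>" unfolding couplings_def
      using pn m1 m2 by (auto simp: vecof_def vec_eq_iff)
    then have "W \<le> tcost w \<pi>" unfolding W_def by (rule W1_le_tcost)
    then show False using c eps by simp
  qed
  have "compact (convex hull Sgen)"
    by (rule compact_convex_hull, rule finite_imp_compact) (simp add: Sgen_def)
  then obtain a b where ab: "inner a z < b" "\<forall>x\<in>convex hull Sgen. b < inner a x"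
    using separating_hyperplane_closed_point[OF convex_convex_hull compact_imp_closed notin] by blast
  obtain a1 a2 t where a: "a = (a1, a2, t)" by (cases a) auto
  have gen: "b < a1$u + a2$v + t * gdist w u v" for u v
  proof -
    have "(vecof (\<delta> u), vecof (\<delta> v), gdist w u v) \<in> convex hull Sgen"
      by (rule hull_inc) (auto simp: Sgen_def)
    then have "b < inner a (vecof (\<delta> u), vecof (\<delta> v), gdist w u v)" using ab(2) by blast
    then show ?thesis unfolding a by (simp add: inner_vecof sum_indic_r)
  qed
  define A1 where "A1 = (\<Sum>u\<in>UNIV. a1$u * \<mu> u)"
  define A2 where "A2 = (\<Sum>v\<in>UNIV. a2$v * \<nu> v)"
  have zin: "A1 + A2 + t * (W - \<epsilon>) < b" using ab(1) unfolding a z_def A1_def A2_def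
    by (simp add: inner_vecof)
  define \<pi>0 where "\<pi>0 = (\<lambda>u v. \<mu> u * \<nu> v)"
  have pc: "\<pi>0 \<in> couplings \<mu> \<nu>" unfolding \<pi>0_def by (rule prod_coupling) (use assms in auto)
  have "(\<Sum>u\<in>UNIV. \<Sum>v\<in>UNIV. \<pi>0 u v * b) \<le> (\<Sum>u\<in>UNIV. \<Sum>v\<in>UNIV. \<pi>0 u v * (a1$u + a2$v + t * gdist w u v))"
    using gen mnn nnn unfolding \<pi>0_def
    by (intro sum_mono mult_left_mono) (auto intro: less_imp_le)
  also have "\<dots> = A1 + A2 + t * tcost w \<pi>0"
  proof -
    have e1: "(\<Sum>u\<in>UNIV. \<Sum>v\<in>UNIV. \<pi>0 u v * a1$u) = A1"
    proof -
      have "(\<Sum>v\<in>UNIV. \<mu> u * \<nu> v * a1$u) = \<mu> u * a1$u" for u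
      proof -
        have "(\<Sum>v\<in>UNIV. \<mu> u * \<nu> v * a1$u) = (\<mu> u * a1$u) * (\<Sum>v\<in>UNIV. \<nu> v)"
          by (simp add: sum_distrib_left mult_ac)
        then show ?thesis using ns by simp
      qed
      then show ?thesis unfolding \<pi>0_def A1_def by (simp add: mult.commute)
    qed
    have e2: "(\<Sum>u\<in>UNIV. \<Sum>v\<in>UNIV. \<pi>0 u v * a2$v) = A2"
      unfolding \<pi>0_def A2_def
      by (simp add: mult.commute mult.left_commute sum_distrib_left[symmetric] sum_distrib_right[symmetric] ms sum.swap[of "\<lambda>u v. \<mu> u * (\<nu> v * a2$v)"])
    have e3: "(\<Sum>u\<in>UNIV. \<Sum>v\<in>UNIV. \<pi>0 u v * (t * gdist w u v)) = t * tcost w \<pi>0"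
      unfolding tcost_def by (simp add: sum_distrib_left mult.commute mult.left_commute)
    show ?thesis unfolding distrib_left sum.distrib e1 e2 e3 ..
  qed
  finally have "b \<le> A1 + A2 + t * tcost w \<pi>0"
    unfolding \<pi>0_def by (simp add: sum_distrib_right[symmetric] sum_distrib_left[symmetric] ms ns)
  moreover have "W \<le> tcost w \<pi>0" unfolding W_def by (rule W1_le_tcost[OF pc])
  ultimately have tpos: "0 < t" using zin eps
    by (smt (verit, best) mult_less_cancel_left)
  define p where "p = (\<lambda>u. - a1$u / t)"
  define q where "q = (\<lambda>v. (b - a2$v) / t)"
  have pq: "p u + q v < gdist w u v" for u v
  proof -
    have "p u + q v = (b - a1$u - a2$v) / t" unfolding p_def q_def using tpos by (simp add: field_simps)
    also have "\<dots> < gdist w u v" using gen[of u v] tpos by (simp add: divide_less_eq mult.commute)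
    finally show ?thesis .
  qed
  have Wlt: "W - \<epsilon> < (\<Sum>u\<in>UNIV. p u * \<mu> u) + (\<Sum>v\<in>UNIV. q v * \<nu> v)"
  proof -
    have "(\<Sum>u\<in>UNIV. p u * \<mu> u) = - A1 / t" unfolding p_def A1_def
      by (simp add: sum_divide_distrib[symmetric] sum_negf)
    moreover have "(\<Sum>v\<in>UNIV. q v * \<nu> v) = (b - A2) / t" unfolding q_def A2_def
      by (simp add: sum_divide_distrib[symmetric] left_diff_distrib sum_subtractf sum_distrib_left[symmetric] ns)
    moreover have "W - \<epsilon> < (b - A1 - A2) / t" using zin tpos by (simp add: less_divide_eq mult.commute)
    ultimately show ?thesis by (simp add: diff_divide_distrib)
  qed
  define g where "g = (\<lambda>u. Min (range (\<lambda>v. gdist w u v - q v)))"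
  have gle: "g u \<le> gdist w u v - q v" for u v unfolding g_def by (rule Min_le) auto
  have gex: "\<exists>v. g u = gdist w u v - q v" for u
  proof -
    have "g u \<in> range (\<lambda>v. gdist w u v - q v)" unfolding g_def by (rule Min_in) auto
    then show ?thesis by auto
  qed
  have gp: "p u \<le> g u" for u
  proof -
    obtain v where "g u = gdist w u v - q v" using gex by blast
    then show ?thesis using pq[of u v] by simp
  qed
  have gq: "g v \<le> - q v" for v using gle[of v v] gdist_refl by simp
  have gL: "g \<in> Lip1 w" unfolding Lip1_def
  proof (intro CollectI allI)
    fix u u'
    have "g u - g u' \<le> gdist w u u'" if "True" for u u'
    proof -
      obtain v where v: "g u' = gdist w u' v - q v" using gex by blast
      have "g u \<le> gdist w u v - q v" by (rule gle)
      also have "\<dots> \<le> gdist w u u' + gdist w u' v - q v" using gdist_tri[of u v u'] by simp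
      finally show ?thesis using v by simp
    qed
    then have "g u - g u' \<le> gdist w u u'" "g u' - g u \<le> gdist w u' u" by auto
    then show "\<bar>g u - g u'\<bar> \<le> gdist w u u'" using gdist_sym[of u u'] by linarith
  qed
  have "(\<Sum>u\<in>UNIV. p u * \<mu> u) + (\<Sum>v\<in>UNIV. q v * \<nu> v) \<le> pairing g \<mu> \<nu>"
  proof -
    have "(\<Sum>u\<in>UNIV. p u * \<mu> u) \<le> (\<Sum>u\<in>UNIV. g u * \<mu> u)"
      by (intro sum_mono mult_right_mono gp mnn)
    moreover have "(\<Sum>v\<in>UNIV. q v * \<nu> v) \<le> (\<Sum>v\<in>UNIV. - g v * \<nu> v)"
      using gq by (intro sum_mono mult_right_mono nnn) (simp add: le_minus_iff)
    ultimately show ?thesis unfolding pairing_def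
      by (simp add: right_diff_distrib sum_subtractf sum_negf)
  qed
  with Wlt gL show ?thesis unfolding W_def by force
qed


lemma pairing_le_W1:
  assumes "\<And>z. 0 \<le> \<mu> z" "\<And>z. 0 \<le> \<nu> z" "sum \<mu> UNIV = 1" "sum \<nu> UNIV = 1" "g \<in> Lip1 w"
  shows "pairing g \<mu> \<nu> \<le> W1 w \<mu> \<nu>"
  unfolding W1_tcost
proof (rule cInf_greatest)
  show "tcost w ` couplings \<mu> \<nu> \<noteq> {}" using prod_coupling[OF assms(1-4)] by blast
  show "\<And>c. c \<in> tcost w ` couplings \<mu> \<nu> \<Longrightarrow> pairing g \<mu> \<nu> \<le> c"
    using weak_duality assms(5) by blast
qed

lemma duality:
  assumes "\<And>z. 0 \<le> \<mu> z" "\<And>z. 0 \<le> \<nu> z" "sum \<mu> UNIV = 1" "sum \<nu> UNIV = 1"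
  shows "W1 w \<mu> \<nu> = Sup ((\<lambda>g. pairing g \<mu> \<nu>) ` Lip1 w)"
proof (rule antisym)
  have ne: "(\<lambda>g. pairing g \<mu> \<nu>) ` Lip1 w \<noteq> {}" using zero_Lip1 by blast
  have bdd: "bdd_above ((\<lambda>g. pairing g \<mu> \<nu>) ` Lip1 w)"
    using pairing_le_W1[OF assms] by (intro bdd_aboveI[of _ "W1 w \<mu> \<nu>"]) blast
  show "Sup ((\<lambda>g. pairing g \<mu> \<nu>) ` Lip1 w) \<le> W1 w \<mu> \<nu>"
    using pairing_le_W1[OF assms] by (intro cSup_least[OF ne]) blast
  show "W1 w \<mu> \<nu> \<le> Sup ((\<lambda>g. pairing g \<mu> \<nu>) ` Lip1 w)"
  proof (rule field_le_epsilon)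
    fix e :: real assume "0 < e"
    then obtain g where "g \<in> Lip1 w" "W1 w \<mu> \<nu> - e < pairing g \<mu> \<nu>"
      using strong_eps[OF assms] by blast
    moreover have "pairing g \<mu> \<nu> \<le> Sup ((\<lambda>g. pairing g \<mu> \<nu>) ` Lip1 w)"
      using \<open>g \<in> Lip1 w\<close> by (intro cSup_upper[OF _ bdd]) blast
    ultimately show "W1 w \<mu> \<nu> \<le> Sup ((\<lambda>g. pairing g \<mu> \<nu>) ` Lip1 w) + e" by linarith
  qed
qed

end

lemma sgn_times: "sgn (a::real) * a = \<bar>a\<bar>"
  by (cases a "0::real" rule: linorder_cases) auto

lemma dotp_seg: fixes p q :: "'a::finite"
  shows "dotp (\<lambda>z. s * (\<delta> p z - \<delta> q z)) f = s * (f p - f q)"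
  unfolding dotp_def
  by (simp add: algebra_simps sum_subtractf sum_distrib_left[symmetric] sum_indic_l sum_indic_r)

lemma Bset2:
  fixes p q :: "'a::finite"
  assumes pq: "p \<noteq> q"
  shows "b \<in> Bset {p,q} \<longleftrightarrow> (\<exists>s. \<bar>s\<bar> \<le> 1 \<and> b = (\<lambda>z. s * (\<delta> p z - \<delta> q z)))"
proof
  assume "b \<in> Bset {p,q}"
  then obtain c where c: "\<forall>p q. 0 \<le> c p q" "(\<Sum>p'\<in>{p,q}. \<Sum>q'\<in>{p,q}. c p' q') = 1"
    and b: "b = (\<lambda>z. \<Sum>p'\<in>{p,q}. \<Sum>q'\<in>{p,q}. c p' q' * (\<delta> p' z - \<delta> q' z))"
    unfolding Bset_def by blast
  have s: "c p p + c p q + c q p + c q q = 1" using c(2) pq by simp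
  have "b = (\<lambda>z. (c p q - c q p) * (\<delta> p z - \<delta> q z))"
    unfolding b using pq by (simp add: algebra_simps)
  moreover have "\<bar>c p q - c q p\<bar> \<le> 1" using s c(1) by (smt (verit))
  ultimately show "\<exists>s. \<bar>s\<bar> \<le> 1 \<and> b = (\<lambda>z. s * (\<delta> p z - \<delta> q z))" by blast
next
  assume "\<exists>s. \<bar>s\<bar> \<le> 1 \<and> b = (\<lambda>z. s * (\<delta> p z - \<delta> q z))"
  then obtain s where s: "\<bar>s\<bar> \<le> 1" and b: "b = (\<lambda>z. s * (\<delta> p z - \<delta> q z))" by blast
  define c where "c = (\<lambda>a b. if a = p \<and> b = q then (1+s)/2 else if a = q \<and> b = p then (1-s)/2 else 0)"
  have "\<forall>p q. 0 \<le> c p q" unfolding c_def using s by auto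
  moreover have "(\<Sum>p'\<in>{p,q}. \<Sum>q'\<in>{p,q}. c p' q') = 1" unfolding c_def using pq by (simp add: field_simps)
  moreover have "b = (\<lambda>z. \<Sum>p'\<in>{p,q}. \<Sum>q'\<in>{p,q}. c p' q' * (\<delta> p' z - \<delta> q' z))"
    unfolding b c_def using pq by (simp add: algebra_simps add_divide_distrib diff_divide_distrib)
  ultimately show "b \<in> Bset {p,q}" unfolding Bset_def by blast
qed


lemma max_term:
  fixes p q :: "'a::finite"
  assumes pq: "p \<noteq> q" and bB: "b \<in> Bset {p,q}" and mx: "\<forall>b'\<in>Bset {p,q}. dotp b' f \<le> dotp b f"
  shows "b z * dotp b f = (\<delta> p z - \<delta> q z) * (f p - f q)"
proof -
  obtain s where s: "\<bar>s\<bar> \<le> 1" and b: "b = (\<lambda>z. s * (\<delta> p z - \<delta> q z))"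
    using bB Bset2[OF pq] by blast
  have "(\<lambda>z. sgn (f p - f q) * (\<delta> p z - \<delta> q z)) \<in> Bset {p,q}"
    unfolding Bset2[OF pq] by (intro exI[of _ "sgn (f p - f q)"]) (auto simp: abs_sgn_eq)
  with mx have "dotp (\<lambda>z. sgn (f p - f q) * (\<delta> p z - \<delta> q z)) f \<le> dotp b f" by blast
  then have "sgn (f p - f q) * (f p - f q) \<le> s * (f p - f q)"
    unfolding b dotp_seg .
  then have ge: "\<bar>f p - f q\<bar> \<le> s * (f p - f q)" by (simp add: sgn_times)
  show ?thesis
  proof (cases "f p = f q")
    case True then show ?thesis unfolding b dotp_seg by simp
  next
    case False
    have "\<bar>f p - f q\<bar> \<le> \<bar>s\<bar> * \<bar>f p - f q\<bar>" using ge
      by (metis abs_ge_self abs_mult order.trans)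
    then have "1 \<le> \<bar>s\<bar>" using False by simp
    then have "s * s = 1" using s by (metis abs_mult_self_eq antisym mult_1)
    moreover have "s * (\<delta> p z - \<delta> q z) * (s * (f p - f q)) = (s * s) * ((\<delta> p z - \<delta> q z) * (f p - f q))"
      by (simp only: mult_ac)
    ultimately show ?thesis unfolding b dotp_seg by simp
  qed
qed

context wgraph begin

definition Lap :: "('a \<Rightarrow> real) \<Rightarrow> 'a \<Rightarrow> real" where
  "Lap h z = (\<Sum>q\<in>UNIV. w z q * (h z - h q))"

lemma adj_neq: "adj w p q \<Longrightarrow> p \<noteq> q"
  unfolding adj_def using wdiag by auto

lemma hweight: "adj w p q \<Longrightarrow> graph_hweight w {p,q} = w p q"
proof -
  assume a: "adj w p q"
  have "\<exists>c. \<exists>x y. {p,q} = {x, y} \<and> x \<noteq> y \<and> c = w x y" using adj_neq[OF a] by blast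
  then have "\<exists>x y. {p,q} = {x, y} \<and> x \<noteq> y \<and> graph_hweight w {p,q} = w x y"
    unfolding graph_hweight_def by (rule someI_ex)
  then obtain x y where "{p,q} = {x,y}" "graph_hweight w {p,q} = w x y" by blast
  then show ?thesis using wsym by (auto simp: doubleton_eq_iff)
qed

lemma finite_H: "finite (graph_hyperedges w)" by simp

definition oth :: "'a \<Rightarrow> 'a set \<Rightarrow> 'a" where "oth z e = the_elem (e - {z})"

lemma term_eq:
  assumes a: "adj w p q" and bB: "b \<in> Bset {p,q}" and mx: "\<forall>b'\<in>Bset {p,q}. dotp b' f \<le> dotp b f"
  shows "graph_hweight w {p,q} * b z * dotp b f =
     (if z \<in> {p,q} then w z (oth z {p,q}) * (f z - f (oth z {p,q})) else 0)"
proof -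
  have pq: "p \<noteq> q" using adj_neq[OF a] .
  have "graph_hweight w {p,q} * b z * dotp b f = w p q * ((\<delta> p z - \<delta> q z) * (f p - f q))"
    using max_term[OF pq bB mx, of z] hweight[OF a] by (simp add: mult.assoc)
  also have "\<dots> = (if z \<in> {p,q} then w z (oth z {p,q}) * (f z - f (oth z {p,q})) else 0)"
  proof (cases "z = p")
    case True
    then have "oth z {p,q} = q" unfolding oth_def using pq by (simp add: insert_Diff_if)
    then show ?thesis using True pq by (simp add: indic_def)
  next
    case False
    show ?thesis
    proof (cases "z = q")
      case True
      then have "oth z {p,q} = p" unfolding oth_def using pq by (auto simp: insert_Diff_if)
      then show ?thesis using True pq wsym[of p q] by (simp add: indic_def algebra_simps)
    next
      case False
      then show ?thesis using \<open>z \<noteq> p\<close> by (simp add: indic_def)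
    qed
  qed
  finally show ?thesis .
qed

lemma sum_edges:
  "(\<Sum>e\<in>graph_hyperedges w. (if z \<in> e then w z (oth z e) * (f z - f (oth z e)) else 0)) = Lap f z"
proof -
  let ?H = "graph_hyperedges w"
  let ?N = "{q. adj w z q}"
  let ?G = "\<lambda>q. w z q * (f z - f q)"
  have "(\<Sum>e\<in>?H. (if z \<in> e then w z (oth z e) * (f z - f (oth z e)) else 0))
      = (\<Sum>e\<in>{e\<in>?H. z \<in> e}. w z (oth z e) * (f z - f (oth z e)))"
    by (simp add: sum.inter_filter[symmetric])
  also have "{e\<in>?H. z \<in> e} = (\<lambda>q. {z,q}) ` ?N"
  proof
    show "{e\<in>?H. z \<in> e} \<subseteq> (\<lambda>q. {z,q}) ` ?N"
    proof
      fix e assume "e \<in> {e\<in>?H. z \<in> e}"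
      then obtain p q where e: "e = {p,q}" "adj w p q" "z \<in> e" unfolding graph_hyperedges_def by blast
      show "e \<in> (\<lambda>q. {z,q}) ` ?N"
      proof (cases "z = p")
        case True then show ?thesis using e by auto
      next
        case False then have "z = q" using e by auto
        then show ?thesis using e adj_sym by (auto simp: insert_commute)
      qed
    qed
    show "(\<lambda>q. {z,q}) ` ?N \<subseteq> {e\<in>?H. z \<in> e}" unfolding graph_hyperedges_def by blast
  qed
  also have "(\<Sum>e\<in>(\<lambda>q. {z,q}) ` ?N. w z (oth z e) * (f z - f (oth z e))) = (\<Sum>q\<in>?N. ?G q)"
  proof (rule sum.reindex_cong)
    show "inj_on (\<lambda>q. {z,q}) ?N"
      by (rule inj_onI) (auto simp: doubleton_eq_iff dest: adj_neq)
    show "(\<lambda>q. {z,q}) ` ?N = (\<lambda>q. {z,q}) ` ?N" ..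
    fix q assume "q \<in> ?N"
    then have "z \<noteq> q" using adj_neq by blast
    then have "oth z {z,q} = q" unfolding oth_def by simp
    then show "w z (oth z {z,q}) * (f z - f (oth z {z,q})) = ?G q" by simp
  qed
  also have "\<dots> = (\<Sum>q\<in>UNIV. ?G q)"
  proof (rule sum.mono_neutral_left)
    show "\<forall>q\<in>UNIV - ?N. ?G q = 0"
    proof
      fix q assume "q \<in> UNIV - ?N"
      then have "w z q = 0" using wnn[of z q] unfolding adj_def by auto
      then show "?G q = 0" by simp
    qed
  qed auto
  finally show ?thesis unfolding Lap_def .
qed

lemma hyp_lap: "hyp_laplacian (graph_hyperedges w) (graph_hweight w) f = {Lap f}"
proof -
  let ?H = "graph_hyperedges w"
  let ?Q = "\<lambda>e b. b \<in> Bset e \<and> (\<forall>b'\<in>Bset e. dotp b' f \<le> dotp b f)"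
  have ex: "\<forall>e\<in>?H. \<exists>b. ?Q e b"
  proof
    fix e assume "e \<in> ?H"
    then obtain p q where e: "e = {p,q}" "adj w p q" unfolding graph_hyperedges_def by blast
    have pq: "p \<noteq> q" using adj_neq[OF e(2)] .
    let ?b = "\<lambda>z. sgn (f p - f q) * (\<delta> p z - \<delta> q z)"
    have "?b \<in> Bset e" unfolding e Bset2[OF pq] by (intro exI[of _ "sgn (f p - f q)"]) (auto simp: abs_sgn_eq)
    moreover have "\<forall>b'\<in>Bset e. dotp b' f \<le> dotp ?b f"
    proof
      fix b' assume "b' \<in> Bset e"
      then obtain s where s: "\<bar>s\<bar> \<le> 1" "b' = (\<lambda>z. s * (\<delta> p z - \<delta> q z))"
        unfolding e using Bset2[OF pq] by blast
      have "s * (f p - f q) \<le> \<bar>s\<bar> * \<bar>f p - f q\<bar>" by (metis abs_ge_self abs_mult)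
      also have "\<dots> \<le> \<bar>f p - f q\<bar>" using s(1) by (simp add: mult_left_le_one_le)
      finally have "s * (f p - f q) \<le> \<bar>f p - f q\<bar>" .
      then show "dotp b' f \<le> dotp ?b f" unfolding s(2) dotp_seg
        by (simp add: sgn_times)
    qed
    ultimately show "\<exists>b. ?Q e b" by blast
  qed
  have val: "(\<lambda>z. \<Sum>e\<in>?H. graph_hweight w e * b e z * dotp (b e) f) = Lap f"
    if hb: "\<forall>e\<in>?H. ?Q e (b e)" for b
  proof
    fix z
    have "(\<Sum>e\<in>?H. graph_hweight w e * b e z * dotp (b e) f)
        = (\<Sum>e\<in>?H. (if z \<in> e then w z (oth z e) * (f z - f (oth z e)) else 0))"
    proof (rule sum.cong[OF refl])
      fix e assume "e \<in> ?H"
      then obtain p q where e: "e = {p,q}" "adj w p q" unfolding graph_hyperedges_def by blast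
      show "graph_hweight w e * b e z * dotp (b e) f = (if z \<in> e then w z (oth z e) * (f z - f (oth z e)) else 0)"
      proof -
        have "?Q e (b e)" using hb \<open>e \<in> ?H\<close> by blast
        then have "b e \<in> Bset {p,q}" "\<forall>b'\<in>Bset {p,q}. dotp b' f \<le> dotp (b e) f" unfolding e(1) by auto
        from term_eq[OF e(2) this] show ?thesis unfolding e(1) .
      qed
    qed
    then show "(\<Sum>e\<in>?H. graph_hweight w e * b e z * dotp (b e) f) = Lap f z" using sum_edges by simp
  qed
  from bchoice[OF ex] obtain b0 where b0: "\<forall>e\<in>?H. ?Q e (b0 e)" by blast
  show ?thesis unfolding hyp_laplacian_def
  proof (intro set_eqI iffI)
    fix g assume "g \<in> {g. \<exists>b. (\<forall>e\<in>?H. ?Q e (b e)) \<and> g = (\<lambda>z. \<Sum>e\<in>?H. graph_hweight w e * b e z * dotp (b e) f)}"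
    then obtain b where "\<forall>e\<in>?H. ?Q e (b e)" "g = (\<lambda>z. \<Sum>e\<in>?H. graph_hweight w e * b e z * dotp (b e) f)" by blast
    then show "g \<in> {Lap f}" using val by simp
  next
    fix g assume "g \<in> {Lap f}"
    then show "g \<in> {g. \<exists>b. (\<forall>e\<in>?H. ?Q e (b e)) \<and> g = (\<lambda>z. \<Sum>e\<in>?H. graph_hweight w e * b e z * dotp (b e) f)}"
      using val[OF b0] b0 by (intro CollectI exI[of _ b0]) simp
  qed
qed

end

context wgraph begin

definition Pw :: "('a \<Rightarrow> real) \<Rightarrow> 'a \<Rightarrow> real" where
  "Pw h z = (\<Sum>q\<in>UNIV. w z q / deg w z * h q)"

definition Rop :: "real \<Rightarrow> ('a \<Rightarrow> real) \<Rightarrow> 'a \<Rightarrow> real" where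
  "Rop lam h z = h z + lam * (h z - Pw h z)"

lemma sum_P: "(\<Sum>q\<in>UNIV. w z q / deg w z) = 1"
  using deg_pos[of z] unfolding deg_def by (simp add: sum_divide_distrib[symmetric])

lemma sum_Pc: "(\<Sum>q\<in>UNIV. w z q / deg w z * c) = c"
proof -
  have "(\<Sum>q\<in>UNIV. w z q / deg w z * c) = (\<Sum>q\<in>UNIV. w z q / deg w z) * c"
    by (rule sum_distrib_right[symmetric])
  then show ?thesis using sum_P[of z] by simp
qed

lemma Pw_lin: "Pw (\<lambda>z. a * h1 z + b * h2 z) q = a * Pw h1 q + b * Pw h2 q"
  unfolding Pw_def by (simp add: algebra_simps sum.distrib sum_distrib_left)

lemma Pw_const: "Pw (\<lambda>_. c) z = c"
  unfolding Pw_def by (rule sum_Pc)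

lemma Pw_le: assumes "\<And>q. h q \<le> B" shows "Pw h z \<le> B"
proof -
  have "Pw h z \<le> (\<Sum>q\<in>UNIV. w z q / deg w z * B)" unfolding Pw_def
    using deg_pos[of z] wnn by (intro sum_mono mult_left_mono assms) auto
  also have "\<dots> = B" by (rule sum_Pc)
  finally show ?thesis .
qed

lemma Pw_ge: assumes "\<And>q. B \<le> h q" shows "B \<le> Pw h z"
proof -
  have "(\<Sum>q\<in>UNIV. w z q / deg w z * B) \<le> Pw h z" unfolding Pw_def
    using deg_pos[of z] wnn by (intro sum_mono mult_left_mono assms) auto
  also have "(\<Sum>q\<in>UNIV. w z q / deg w z * B) = B" by (rule sum_Pc)
  finally show ?thesis by simp
qed

lemma Pw_abs: assumes "\<And>q. \<bar>h q\<bar> \<le> B" shows "\<bar>Pw h z\<bar> \<le> B"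
proof -
  have "Pw h z \<le> B" using assms by (intro Pw_le) (simp add: abs_le_iff)
  moreover have "- B \<le> Pw h z"
  proof (rule Pw_ge)
    fix q show "- B \<le> h q" using assms[of q] unfolding abs_le_iff by linarith
  qed
  ultimately show ?thesis by simp
qed

lemma Lap_eq: "Lap h z = deg w z * (h z - Pw h z)"
proof -
  have "Lap h z = deg w z * h z - (\<Sum>q\<in>UNIV. w z q * h q)"
    unfolding Lap_def deg_def by (simp add: right_diff_distrib sum_subtractf sum_distrib_right)
  moreover have "deg w z * Pw h z = (\<Sum>q\<in>UNIV. w z q * h q)"
    unfolding Pw_def using deg_pos[of z] by (simp add: sum_distrib_left)
  ultimately show ?thesis by (simp add: right_diff_distrib)
qed

lemma max_principle:
  assumes lam: "0 \<le> lam" and B: "\<And>z. Rop lam h z \<le> B"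
  shows "h z \<le> B"
proof -
  have "Max (range h) \<in> range h" by (rule Max_in) auto
  then obtain z0 where z0': "Max (range h) = h z0" by (rule imageE)
  then have z0: "h z0 = Max (range h)" by simp
  have hz: "\<And>q. h q \<le> h z0" unfolding z0 by (rule Max_ge) auto
  have "Pw h z0 \<le> h z0" by (rule Pw_le[OF hz])
  then have "h z0 \<le> Rop lam h z0" unfolding Rop_def using lam by simp
  then show ?thesis using B[of z0] hz[of z] by linarith
qed

lemma Rop_lin: "Rop lam (\<lambda>z. a * h1 z + b * h2 z) q = a * Rop lam h1 q + b * Rop lam h2 q"
  unfolding Rop_def Pw_lin by (simp add: algebra_simps)

lemma min_principle:
  assumes lam: "0 \<le> lam" and B: "\<And>z. B \<le> Rop lam h z"
  shows "B \<le> h z"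
proof -
  have "\<And>z. Rop lam (\<lambda>z. (-1) * h z + 0 * h z) z \<le> - B" using B unfolding Rop_lin by (simp add: le_minus_iff)
  from max_principle[OF lam this, of z] show ?thesis by simp
qed

lemma Rop_unique:
  assumes lam: "0 \<le> lam" and eq: "\<And>z. Rop lam h1 z = Rop lam h2 z"
  shows "h1 = h2"
proof
  fix z
  have "\<And>z. Rop lam (\<lambda>z. 1 * h1 z + (-1) * h2 z) z = 0" unfolding Rop_lin using eq by simp
  then have "(\<lambda>z. 1 * h1 z + (-1) * h2 z) z \<le> 0" "0 \<le> (\<lambda>z. 1 * h1 z + (-1) * h2 z) z"
    using max_principle[OF lam] min_principle[OF lam] by (metis order_refl)+
  then show "h1 z = h2 z" by simp
qed

lemma Rop_exists:
  assumes lam: "0 \<le> lam"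
  shows "\<exists>h. \<forall>z. Rop lam h z = g z"
proof -
  define F where "F = (\<lambda>v::real^'a. vecof (Rop lam (\<lambda>z. v$z)))"
  have lin: "linear F"
  proof (rule linearI)
    fix v1 v2 :: "real^'a"
    have e: "(\<lambda>z. (v1 + v2)$z) = (\<lambda>z. 1 * v1$z + 1 * v2$z)" by simp
    show "F (v1 + v2) = F v1 + F v2" unfolding F_def vecof_def e Rop_lin by (simp add: vec_eq_iff)
  next
    fix r and v :: "real^'a"
    have e: "(\<lambda>z. (r *\<^sub>R v)$z) = (\<lambda>z. r * v$z + 0 * v$z)" by simp
    show "F (r *\<^sub>R v) = r *\<^sub>R F v" unfolding F_def vecof_def e Rop_lin by (simp add: vec_eq_iff)
  qed
  have "inj F"
  proof (rule injI)
    fix v1 v2 assume "F v1 = F v2"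
    then have "\<And>z. Rop lam (\<lambda>z. v1$z) z = Rop lam (\<lambda>z. v2$z) z" unfolding F_def vecof_def
      by (simp add: vec_eq_iff)
    then have "(\<lambda>z. v1$z) = (\<lambda>z. v2$z)" by (rule Rop_unique[OF lam])
    then show "v1 = v2" by (simp add: vec_eq_iff fun_eq_iff)
  qed
  then have "surj F" using lin linear_inj_imp_surj by blast
  then obtain v where "F v = vecof g" by (metis surjD)
  then have "\<forall>z. Rop lam (\<lambda>z. v$z) z = g z" unfolding F_def vecof_def by (simp add: vec_eq_iff)
  then show ?thesis by blast
qed

definition Rv :: "real \<Rightarrow> ('a \<Rightarrow> real) \<Rightarrow> 'a \<Rightarrow> real" where
  "Rv lam g = (THE h. \<forall>z. Rop lam h z = g z)"

lemma Rv: assumes "0 \<le> lam" shows "Rop lam (Rv lam g) z = g z"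
proof -
  obtain h where h: "\<forall>z. Rop lam h z = g z" using Rop_exists[OF assms] by blast
  have "Rv lam g = h" unfolding Rv_def
    by (rule the_equality) (use h Rop_unique[OF assms] in auto)
  then show ?thesis using h by simp
qed

lemma Rv_eqI: assumes "0 \<le> lam" "\<And>z. Rop lam h z = g z" shows "Rv lam g = h"
  using Rop_unique[OF assms(1)] Rv[OF assms(1)] assms(2) by metis

end

lemma Sup_approx:
  fixes \<phi> \<psi> :: "'b \<Rightarrow> real"
  assumes ne: "A \<noteq> {}" and close: "\<And>g. g \<in> A \<Longrightarrow> \<bar>\<phi> g - \<psi> g\<bar> \<le> e" and bdd: "bdd_above (\<psi> ` A)"
  shows "\<bar>Sup (\<phi> ` A) - Sup (\<psi> ` A)\<bar> \<le> e"
proof -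
  have le1: "\<psi> g \<le> Sup (\<psi> ` A)" if "g \<in> A" for g using bdd that by (intro cSup_upper) auto
  have bdd2: "bdd_above (\<phi> ` A)"
    using close le1 by (intro bdd_aboveI[of _ "Sup (\<psi> ` A) + e"]) (force simp: abs_le_iff)
  have le2: "\<phi> g \<le> Sup (\<phi> ` A)" if "g \<in> A" for g using bdd2 that by (intro cSup_upper) auto
  have "Sup (\<phi> ` A) \<le> Sup (\<psi> ` A) + e"
  proof (rule cSup_least)
    show "\<phi> ` A \<noteq> {}" using ne by blast
    fix v assume "v \<in> \<phi> ` A"
    then obtain g where "g \<in> A" "v = \<phi> g" by blast
    then show "v \<le> Sup (\<psi> ` A) + e" using close[of g] le1[of g] by (simp add: abs_le_iff)
  qed
  moreover have "Sup (\<psi> ` A) \<le> Sup (\<phi> ` A) + e"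
  proof (rule cSup_least)
    show "\<psi> ` A \<noteq> {}" using ne by blast
    fix v assume "v \<in> \<psi> ` A"
    then obtain g where "g \<in> A" "v = \<psi> g" by blast
    then show "v \<le> Sup (\<phi> ` A) + e" using close[of g] le2[of g] by (simp add: abs_le_iff)
  qed
  ultimately show ?thesis by (simp add: abs_le_iff)
qed

context wgraph begin

lemma graph_resolvent_eq:
  assumes lam: "0 \<le> lam"
  shows "graph_resolvent w lam f = (\<lambda>z. deg w z * Rv lam (\<lambda>z. f z / deg w z) z)"
proof -
  define g0 where "g0 = (\<lambda>z. f z / deg w z)"
  define u0 where "u0 = (\<lambda>z. deg w z * Rv lam g0 z)"
  have dnz: "\<And>z. deg w z \<noteq> 0" using deg_pos by (metis less_irrefl)
  have P_iff: "(\<exists>g\<in>norm_laplacian (graph_hyperedges w) (graph_hweight w) (deg w) u. f = (\<lambda>z. u z + lam * g z))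
      \<longleftrightarrow> f = (\<lambda>z. u z + lam * Lap (\<lambda>x. u x / deg w x) z)" for u
    unfolding norm_laplacian_def hyp_lap by simp
  have key: "(\<lambda>z. u z + lam * Lap (\<lambda>x. u x / deg w x) z) = (\<lambda>z. deg w z * Rop lam (\<lambda>x. u x / deg w x) z)" for u
  proof
    fix z
    have "u z = deg w z * (u z / deg w z)" using dnz[of z] by simp
    then show "u z + lam * Lap (\<lambda>x. u x / deg w x) z = deg w z * Rop lam (\<lambda>x. u x / deg w x) z"
      unfolding Lap_eq Rop_def using dnz[of z] by (simp add: algebra_simps)
  qed
  have u0d: "(\<lambda>x. u0 x / deg w x) = Rv lam g0" unfolding u0_def using dnz by (simp add: fun_eq_iff)
  have "graph_resolvent w lam f = u0" unfolding graph_resolvent_def resolvent_def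
  proof (rule the_equality)
    show "\<exists>g\<in>norm_laplacian (graph_hyperedges w) (graph_hweight w) (deg w) u0. f = (\<lambda>z. u0 z + lam * g z)"
    proof -
      have "(\<lambda>z. u0 z + lam * Lap (\<lambda>x. u0 x / deg w x) z) = f"
        unfolding key unfolding u0d using Rv[OF lam, of g0] dnz unfolding g0_def by (simp add: fun_eq_iff)
      then show ?thesis unfolding P_iff by simp
    qed
  next
    fix u assume "\<exists>g\<in>norm_laplacian (graph_hyperedges w) (graph_hweight w) (deg w) u. f = (\<lambda>z. u z + lam * g z)"
    then have "f = (\<lambda>z. deg w z * Rop lam (\<lambda>x. u x / deg w x) z)" unfolding P_iff key .
    then have "\<And>z. Rop lam (\<lambda>x. u x / deg w x) z = g0 z" unfolding g0_def using dnz by (simp add: fun_eq_iff)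
    then have "Rv lam g0 = (\<lambda>x. u x / deg w x)" by (rule Rv_eqI[OF lam])
    then show "u = u0" unfolding u0_def using dnz by (simp add: fun_eq_iff)
  qed
  then show ?thesis unfolding u0_def g0_def .
qed

lemma winner_eq: "winner (deg w) (\<lambda>z. deg w z * H z) (\<delta> x - \<delta> y) = H x - H y"
proof -
  have dnz: "\<And>z. deg w z \<noteq> 0" using deg_pos by (metis less_irrefl)
  have "winner (deg w) (\<lambda>z. deg w z * H z) (\<delta> x - \<delta> y) = (\<Sum>z\<in>UNIV. H z * \<delta> x z - H z * \<delta> y z)"
    unfolding winner_def
  proof (intro sum.cong refl)
    fix z
    have "deg w z * H z * (\<delta> x z - \<delta> y z) / deg w z = H z * \<delta> x z - H z * \<delta> y z"
      using dnz[of z] by (simp add: field_simps)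
    then show "deg w z * H z * (\<delta> x - \<delta> y) z / deg w z = H z * \<delta> x z - H z * \<delta> y z" by simp
  qed
  also have "\<dots> = H x - H y" by (simp add: sum_subtractf sum_indic_r)
  finally show ?thesis .
qed

lemma Pw_shift: "Pw (\<lambda>z. h z + c) q = Pw h q + c"
  using Pw_lin[of 1 h c "\<lambda>_. 1" q] Pw_const[of 1 q] by simp

lemma Rop_shift: "Rop lam (\<lambda>z. h z + c) q = Rop lam h q + c"
  unfolding Rop_def Pw_shift by (simp add: algebra_simps)

lemma Rv_shift: assumes "0 \<le> lam" shows "Rv lam (\<lambda>z. g z + c) = (\<lambda>z. Rv lam g z + c)"
  by (rule Rv_eqI[OF assms]) (simp add: Rop_shift Rv[OF assms])

lemma Rv_approx:
  assumes lam: "0 \<le> lam" and M: "\<And>z. \<bar>g z\<bar> \<le> M"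
  shows "\<bar>Rv lam g z - ((1-lam) * g z + lam * Pw g z)\<bar> \<le> 4 * lam^2 * M"
proof -
  define h where "h = Rv lam g"
  have hg: "\<And>z. Rop lam h z = g z" unfolding h_def by (rule Rv[OF lam])
  have hM: "\<bar>h q\<bar> \<le> M" for q
  proof -
    have "h q \<le> M" using max_principle[OF lam, of h M] hg M by (metis abs_le_iff)
    moreover have "- M \<le> h q" using min_principle[OF lam, of "-M" h] hg M by (metis abs_le_iff minus_le_iff)
    ultimately show ?thesis by simp
  qed
  define D1 where "D1 = (\<lambda>z. h z - Pw h z)"
  define D2 where "D2 = (\<lambda>z. D1 z - Pw D1 z)"
  have D1M: "\<bar>D1 q\<bar> \<le> 2 * M" for q
    using hM[of q] Pw_abs[of h M q, OF hM] unfolding D1_def by simp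
  have D2M: "\<bar>D2 q\<bar> \<le> 4 * M" for q
    using D1M[of q] Pw_abs[of D1 "2*M" q, OF D1M] unfolding D2_def by simp
  have gform: "g = (\<lambda>z. 1 * h z + lam * D1 z)" using hg unfolding Rop_def D1_def by (simp add: fun_eq_iff)
  have Pg: "Pw g z = Pw h z + lam * Pw D1 z" by (subst gform) (use Pw_lin[of 1 h lam D1 z] in simp)
  have "h z - ((1-lam) * g z + lam * Pw g z) = lam^2 * D2 z"
  proof -
    have e: "g z = h z + lam * (h z - Pw h z)" using hg[of z] unfolding Rop_def by simp
    show ?thesis unfolding Pg e D2_def D1_def by (simp add: algebra_simps power2_eq_square)
  qed
  then have "\<bar>h z - ((1-lam) * g z + lam * Pw g z)\<bar> = lam^2 * \<bar>D2 z\<bar>" by (simp add: abs_mult)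
  also have "\<dots> \<le> lam^2 * (4 * M)" by (rule mult_left_mono[OF D2M]) simp
  finally show ?thesis unfolding h_def by simp
qed

end

context wgraph begin

definition Phi :: "'a \<Rightarrow> 'a \<Rightarrow> real \<Rightarrow> ('a \<Rightarrow> real) \<Rightarrow> real" where
  "Phi x y a g = a * (g x - g y) + (1-a) * (Pw g x - Pw g y)"

definition Fv :: "'a \<Rightarrow> 'a \<Rightarrow> real \<Rightarrow> real" where
  "Fv x y a = Sup (Phi x y a ` Lip1 w)"

definition Mb :: real where "Mb = (\<Sum>u\<in>UNIV. \<Sum>v\<in>UNIV. gdist w u v)"

lemma gdist_le_Mb: "gdist w u v \<le> Mb"
proof -
  have "gdist w u v \<le> (\<Sum>v\<in>UNIV. gdist w u v)" by (rule member_le_sum) (auto simp: gdist_nn)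
  also have "\<dots> \<le> Mb" unfolding Mb_def by (rule member_le_sum) (auto intro: sum_nonneg gdist_nn)
  finally show ?thesis .
qed

lemma mlazy_expand: "mlazy w a x z = a * \<delta> x z + (1-a) * (w x z / deg w x)"
  unfolding mlazy_def indic_def using wdiag by auto

lemma mlazy_nn: "0 \<le> a \<Longrightarrow> a \<le> 1 \<Longrightarrow> 0 \<le> mlazy w a x z"
  unfolding mlazy_expand indic_def using wnn deg_pos[of x] by auto

lemma mlazy_sum: "sum (mlazy w a x) UNIV = 1"
proof -
  have "sum (mlazy w a x) UNIV = a * (\<Sum>z\<in>UNIV. \<delta> x z) + (1-a) * (\<Sum>z\<in>UNIV. w x z / deg w x)"
    unfolding mlazy_expand by (simp add: sum.distrib sum_distrib_left)
  then show ?thesis using sum_P[of x] by (simp add: sum_indic)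
qed

lemma pairing_mlazy_1: "(\<Sum>z\<in>UNIV. g z * mlazy w a x z) = a * g x + (1-a) * Pw g x"
proof -
  have "(\<Sum>z\<in>UNIV. g z * mlazy w a x z) = a * (\<Sum>z\<in>UNIV. g z * \<delta> x z) + (1-a) * (\<Sum>z\<in>UNIV. w x z / deg w x * g z)"
    unfolding mlazy_expand by (simp add: sum.distrib sum_distrib_left algebra_simps)
  then show ?thesis unfolding Pw_def by (simp add: sum_indic_r)
qed

lemma pairing_mlazy: "pairing g (mlazy w a x) (mlazy w a y) = Phi x y a g"
  unfolding pairing_def Phi_def right_diff_distrib sum_subtractf pairing_mlazy_1
  by (simp add: algebra_simps)

lemma W1_Fv: "0 \<le> a \<Longrightarrow> a \<le> 1 \<Longrightarrow> W1 w (mlazy w a x) (mlazy w a y) = Fv x y a"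
  using duality[of "mlazy w a x" "mlazy w a y"] mlazy_nn mlazy_sum
  unfolding Fv_def pairing_mlazy by simp

lemma Phi_le_Fv: "0 \<le> a \<Longrightarrow> a \<le> 1 \<Longrightarrow> g \<in> Lip1 w \<Longrightarrow> Phi x y a g \<le> Fv x y a"
  using pairing_le_W1[of "mlazy w a x" "mlazy w a y" g] mlazy_nn mlazy_sum W1_Fv
  unfolding pairing_mlazy by simp

lemma bdd_Phi: "0 \<le> a \<Longrightarrow> a \<le> 1 \<Longrightarrow> bdd_above (Phi x y a ` Lip1 w)"
  using Phi_le_Fv by (intro bdd_aboveI[of _ "Fv x y a"]) blast

lemma kappa_alpha_eq: "0 \<le> a \<Longrightarrow> a \<le> 1 \<Longrightarrow> kappa_alpha w a x y = 1 - Fv x y a / gdist w x y"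
  unfolding kappa_alpha_def using W1_Fv by simp

end

context wgraph begin

definition val :: "'a \<Rightarrow> 'a \<Rightarrow> real \<Rightarrow> ('a \<Rightarrow> real) \<Rightarrow> real" where
  "val x y lam g = Rv lam g x - Rv lam g y"

lemma Lip1w_iff: "f \<in> Lip1w w \<longleftrightarrow> (\<lambda>z. f z / deg w z) \<in> Lip1 w"
  unfolding Lip1w_def Lip1_def by simp

lemma KD_eq:
  assumes lam: "0 \<le> lam"
  shows "KD w lam x y = Sup (val x y lam ` Lip1 w)"
proof -
  have dnz: "\<And>z. deg w z \<noteq> 0" using deg_pos by (metis less_irrefl)
  have e1: "(\<lambda>f. winner (deg w) (graph_resolvent w lam f) (\<delta> x - \<delta> y)) = (\<lambda>f. val x y lam (\<lambda>z. f z / deg w z))"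
    unfolding graph_resolvent_eq[OF lam] winner_eq val_def ..
  have e2: "(\<lambda>f. val x y lam (\<lambda>z. f z / deg w z)) ` Lip1w w = val x y lam ` Lip1 w"
  proof -
    have "(\<lambda>f z. f z / deg w z) ` Lip1w w = Lip1 w"
    proof
      show "(\<lambda>f z. f z / deg w z) ` Lip1w w \<subseteq> Lip1 w" using Lip1w_iff by blast
      show "Lip1 w \<subseteq> (\<lambda>f z. f z / deg w z) ` Lip1w w"
      proof
        fix g assume g: "g \<in> Lip1 w"
        have e: "g = (\<lambda>z. (deg w z * g z) / deg w z)" using dnz by (simp add: fun_eq_iff)
        then have m: "(\<lambda>z. deg w z * g z) \<in> Lip1w w" using g Lip1w_iff by simp
        show "g \<in> (\<lambda>f z. f z / deg w z) ` Lip1w w"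
          by (rule image_eqI[where x="\<lambda>z. deg w z * g z"]) (use e m in auto)
      qed
    qed
    then show ?thesis by (metis image_image)
  qed
  show ?thesis unfolding KD_def e1 e2 ..
qed

lemma val_approx:
  assumes lam: "0 \<le> lam" "lam \<le> 1" and g: "g \<in> Lip1 w"
  shows "\<bar>val x y lam g - Phi x y (1-lam) g\<bar> \<le> 8 * lam^2 * Mb"
proof -
  define g' where "g' = (\<lambda>z. g z + (- g x))"
  have vg: "val x y lam g = val x y lam g'" unfolding val_def g'_def Rv_shift[OF lam(1)] by simp
  have pg: "Phi x y (1-lam) g = Phi x y (1-lam) g'" unfolding Phi_def g'_def Pw_shift by simp
  have gM: "\<bar>g' z\<bar> \<le> Mb" for z
  proof -
    have "\<bar>g z - g x\<bar> \<le> gdist w z x" using g unfolding Lip1_def by blast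
    then show ?thesis using gdist_le_Mb[of z x] unfolding g'_def by simp
  qed
  have "\<bar>val x y lam g' - Phi x y (1-lam) g'\<bar>
      = \<bar>(Rv lam g' x - ((1-lam) * g' x + lam * Pw g' x)) - (Rv lam g' y - ((1-lam) * g' y + lam * Pw g' y))\<bar>"
    unfolding val_def Phi_def by (simp add: algebra_simps)
  also have "\<dots> \<le> 4 * lam^2 * Mb + 4 * lam^2 * Mb"
    by (rule order.trans[OF abs_triangle_ineq4], rule add_mono)
      (use Rv_approx[of lam g' Mb x, OF lam(1) gM] Rv_approx[of lam g' Mb y, OF lam(1) gM] in auto)
  finally show ?thesis unfolding vg pg by (simp add: mult_ac)
qed

lemma KD_approx:
  assumes lam: "0 \<le> lam" "lam \<le> 1"
  shows "\<bar>KD w lam x y - Fv x y (1-lam)\<bar> \<le> 8 * lam^2 * Mb"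
  unfolding KD_eq[OF lam(1)] Fv_def
  by (rule Sup_approx) (use zero_Lip1 val_approx[OF lam] bdd_Phi[of "1-lam"] lam in auto)

lemma Fv_mono:
  assumes a: "0 < a" "a \<le> b" "b < 1"
  shows "Fv x y b \<le> (1-b)/(1-a) * Fv x y a + (1 - (1-b)/(1-a)) * gdist w x y"
proof -
  define t where "t = (1-b)/(1-a)"
  have t: "0 \<le> t" "t \<le> 1" unfolding t_def using a by auto
  show ?thesis unfolding t_def[symmetric] Fv_def[of x y b]
  proof (rule cSup_least)
    show "Phi x y b ` Lip1 w \<noteq> {}" using zero_Lip1 by blast
    fix v assume "v \<in> Phi x y b ` Lip1 w"
    then obtain g where g: "g \<in> Lip1 w" "v = Phi x y b g" by blast
    have t1: "t * (1-a) = 1 - b" unfolding t_def using a by simp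
    have "t * Phi x y a g + (1-t) * (g x - g y) = (g x - g y) - (t * (1-a)) * (g x - g y) + (t*(1-a)) * (Pw g x - Pw g y)"
      unfolding Phi_def by (simp add: algebra_simps)
    then have e: "Phi x y b g = t * Phi x y a g + (1-t) * (g x - g y)"
      unfolding t1 Phi_def by (simp add: algebra_simps)
    have "Phi x y a g \<le> Fv x y a" using Phi_le_Fv[of a g] a g by simp
    moreover have "g x - g y \<le> gdist w x y" using g unfolding Lip1_def by (metis (mono_tags) abs_le_D1 mem_Collect_eq)
    ultimately show "v \<le> t * Fv x y a + (1-t) * gdist w x y" unfolding g(2) e
      using t by (intro add_mono mult_left_mono) auto
  qed
qed

definition cc :: "'a \<Rightarrow> 'a \<Rightarrow> real \<Rightarrow> real" where
  "cc x y a = (1 - Fv x y a / gdist w x y) / (1 - a)"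

lemma cc_mono:
  assumes xy: "x \<noteq> y" and a: "0 < a" "a \<le> b" "b < 1"
  shows "cc x y a \<le> cc x y b"
proof -
  define D where "D = gdist w x y"
  have D: "1 \<le> D" unfolding D_def using gdist_pos[OF xy] .
  have m: "Fv x y b \<le> (1-b)/(1-a) * Fv x y a + (1 - (1-b)/(1-a)) * D"
    using Fv_mono[OF a] unfolding D_def .
  have "(1-b)/(1-a) * (1 - Fv x y a / D) \<le> 1 - Fv x y b / D"
  proof -
    have "Fv x y b / D \<le> ((1-b)/(1-a) * Fv x y a + (1 - (1-b)/(1-a)) * D) / D"
      using m D by (simp add: divide_right_mono)
    also have "\<dots> = (1-b)/(1-a) * (Fv x y a / D) + (1 - (1-b)/(1-a))"
    proof -
      have Dnz: "D \<noteq> 0" using D by simp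
      then show ?thesis by (simp add: add_divide_distrib)
    qed
    finally show ?thesis by (simp add: algebra_simps)
  qed
  then have "(1 - Fv x y a / D) / (1-a) \<le> (1 - Fv x y b / D) / (1-b)"
    using a by (simp add: field_simps)
  then show ?thesis unfolding cc_def D_def .
qed

lemma cc_bound:
  assumes xy: "x \<noteq> y" and a: "0 < a" "a < 1"
  shows "cc x y a \<le> 1 + 2 * Mb"
proof -
  define D where "D = gdist w x y"
  have D: "1 \<le> D" unfolding D_def using gdist_pos[OF xy] .
  define g0 where "g0 = (\<lambda>z. gdist w z y)"
  have g0L: "g0 \<in> Lip1 w" unfolding Lip1_def g0_def
  proof (intro CollectI allI)
    fix u v
    show "\<bar>gdist w u y - gdist w v y\<bar> \<le> gdist w u v"
      using gdist_tri[of u y v] gdist_tri[of v y u] gdist_sym[of u v] by simp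
  qed
  have g0M: "\<bar>g0 z\<bar> \<le> Mb" for z unfolding g0_def using gdist_le_Mb gdist_nn by simp
  have "Phi x y a g0 \<le> Fv x y a" using Phi_le_Fv[OF _ _ g0L] a by simp
  moreover have "Phi x y a g0 \<ge> a * D - (1-a) * (2 * Mb)"
  proof -
    have "\<bar>Pw g0 x - Pw g0 y\<bar> \<le> 2 * Mb" using Pw_abs[of g0 Mb x, OF g0M] Pw_abs[of g0 Mb y, OF g0M] by simp
    then have "(1-a) * (- (2 * Mb)) \<le> (1-a) * (Pw g0 x - Pw g0 y)"
      using a by (intro mult_left_mono) (auto simp: abs_le_iff)
    moreover have "g0 x - g0 y = D" unfolding g0_def D_def using gdist_refl by simp
    ultimately show ?thesis unfolding Phi_def by simp
  qed
  ultimately have F: "a * D - (1-a) * (2 * Mb) \<le> Fv x y a" by simp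
  have "1 - Fv x y a / D \<le> 1 - (a * D - (1-a) * (2 * Mb)) / D"
    using F D by (simp add: divide_right_mono)
  also have "\<dots> = (1 - a) * (1 + 2 * Mb / D)" using D by (simp add: field_simps)
  also have "\<dots> \<le> (1 - a) * (1 + 2 * Mb)"
  proof -
    have "0 \<le> Mb" using gdist_le_Mb[of x x] gdist_refl by simp
    then have "2 * Mb / D \<le> 2 * Mb" using D by (simp add: divide_le_eq mult_le_cancel_left1)
    then show ?thesis using a by (intro mult_left_mono) auto
  qed
  finally show ?thesis unfolding cc_def D_def using a by (simp add: divide_le_eq mult.commute)
qed

end

context wgraph begin

definition ell :: "'a \<Rightarrow> 'a \<Rightarrow> real" where
  "ell x y = Sup (cc x y ` {0<..<1})"

lemma cc_bdd: "x \<noteq> y \<Longrightarrow> bdd_above (cc x y ` {0<..<1})"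
  using cc_bound by (intro bdd_aboveI[of _ "1 + 2 * Mb"]) auto

lemma cc_ne: "cc x y ` {0<..<1} \<noteq> {}"
proof -
  have "(1/2::real) \<in> {0<..<1}" by simp
  then show ?thesis by blast
qed

lemma cc_le_ell: "x \<noteq> y \<Longrightarrow> a \<in> {0<..<1} \<Longrightarrow> cc x y a \<le> ell x y"
  unfolding ell_def using cc_bdd by (intro cSup_upper) auto

lemma cc_tendsto:
  assumes xy: "x \<noteq> y"
  shows "(cc x y \<longlongrightarrow> ell x y) (at_left 1)"
proof (rule order_tendstoI)
  fix a' assume "a' < ell x y"
  then obtain a0 where a0: "a0 \<in> {0<..<1}" "a' < cc x y a0"
    unfolding ell_def less_cSup_iff[OF cc_ne cc_bdd[OF xy]] by blast
  have "eventually (\<lambda>a. a \<in> {a0<..<1}) (at_left (1::real))"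
    using a0 by (intro eventually_at_left_real) auto
  then show "eventually (\<lambda>a. a' < cc x y a) (at_left 1)"
  proof (rule eventually_mono)
    fix a assume "a \<in> {a0<..<1}"
    then have "cc x y a0 \<le> cc x y a" using a0 by (intro cc_mono[OF xy]) auto
    then show "a' < cc x y a" using a0 by simp
  qed
next
  fix a' assume "ell x y < a'"
  have "eventually (\<lambda>a. a \<in> {0<..<1}) (at_left (1::real))"
    by (intro eventually_at_left_real) auto
  then show "eventually (\<lambda>a. cc x y a < a') (at_left 1)"
    by (rule eventually_mono) (use cc_le_ell[OF xy] \<open>ell x y < a'\<close> in fastforce)
qed

lemma cc_tendsto_r:
  assumes xy: "x \<noteq> y"
  shows "((\<lambda>lam. cc x y (1 - lam)) \<longlongrightarrow> ell x y) (at_right 0)"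
proof (rule order_tendstoI)
  fix a' assume "a' < ell x y"
  then obtain a0 where a0: "a0 \<in> {0<..<1}" "a' < cc x y a0"
    unfolding ell_def less_cSup_iff[OF cc_ne cc_bdd[OF xy]] by blast
  have "eventually (\<lambda>lam. lam \<in> {0<..<1 - a0}) (at_right (0::real))"
    using a0 by (intro eventually_at_right_real) auto
  then show "eventually (\<lambda>lam. a' < cc x y (1 - lam)) (at_right 0)"
  proof (rule eventually_mono)
    fix lam assume "lam \<in> {0<..<1 - a0}"
    then have "cc x y a0 \<le> cc x y (1 - lam)" using a0 by (intro cc_mono[OF xy]) auto
    then show "a' < cc x y (1 - lam)" using a0 by simp
  qed
next
  fix a' assume "ell x y < a'"
  have "eventually (\<lambda>lam. lam \<in> {0<..<1}) (at_right (0::real))"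
    by (intro eventually_at_right_real) auto
  then show "eventually (\<lambda>lam. cc x y (1 - lam) < a') (at_right 0)"
  proof (rule eventually_mono)
    fix lam :: real assume "lam \<in> {0<..<1}"
    then have "cc x y (1 - lam) \<le> ell x y" by (intro cc_le_ell[OF xy]) auto
    then show "cc x y (1 - lam) < a'" using \<open>ell x y < a'\<close> by simp
  qed
qed

lemma LLY_eq:
  assumes xy: "x \<noteq> y"
  shows "kappa_LLY w x y = ell x y"
proof -
  have "eventually (\<lambda>a. a \<in> {0<..<1}) (at_left (1::real))"
    by (intro eventually_at_left_real) auto
  then have "eventually (\<lambda>a. cc x y a = kappa_alpha w a x y / (1 - a)) (at_left 1)"
    by (rule eventually_mono) (simp add: kappa_alpha_eq cc_def)
  then have "((\<lambda>a. cc x y a) \<longlongrightarrow> ell x y) (at_left 1) = ((\<lambda>a. kappa_alpha w a x y / (1 - a)) \<longlongrightarrow> ell x y) (at_left 1)"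
    by (rule tendsto_cong)
  then have "((\<lambda>a. kappa_alpha w a x y / (1 - a)) \<longlongrightarrow> ell x y) (at_left 1)"
    using cc_tendsto[OF xy] by simp
  then show ?thesis unfolding kappa_LLY_def by (intro tendsto_Lim) auto
qed

lemma kl_tendsto:
  assumes xy: "x \<noteq> y"
  shows "((\<lambda>lam. kappa_lambda w lam x y / lam) \<longlongrightarrow> ell x y) (at_right 0)"
proof -
  define D where "D = gdist w x y"
  have D: "1 \<le> D" unfolding D_def using gdist_pos[OF xy] .
  define err where "err = (\<lambda>lam. (Fv x y (1 - lam) - KD w lam x y) / (D * lam))"
  have ev: "eventually (\<lambda>lam. lam \<in> {0<..<1}) (at_right (0::real))"
    by (intro eventually_at_right_real) auto
  have "eventually (\<lambda>lam. norm (err lam) \<le> 8 * lam * Mb) (at_right 0)"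
    using ev
  proof (rule eventually_mono)
    fix lam :: real assume l: "lam \<in> {0<..<1}"
    have "\<bar>Fv x y (1 - lam) - KD w lam x y\<bar> \<le> 8 * lam^2 * Mb"
      using KD_approx[of lam x y] l by (simp add: abs_minus_commute)
    moreover have "0 < D * lam" using D l by simp
    ultimately have "\<bar>err lam\<bar> \<le> 8 * lam^2 * Mb / (D * lam)"
      unfolding err_def by (simp add: abs_divide divide_right_mono)
    also have "\<dots> = 8 * lam * Mb / D" using l D by (simp add: power2_eq_square)
    also have "\<dots> \<le> 8 * lam * Mb"
    proof -
      have "0 \<le> Mb" using gdist_le_Mb[of x x] gdist_refl by simp
      then have "0 \<le> 8 * lam * Mb" using l by simp
      then show ?thesis using D by (simp add: divide_le_eq mult_le_cancel_left1)
    qed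
    finally show "norm (err lam) \<le> 8 * lam * Mb" by simp
  qed
  moreover have "((\<lambda>lam. 8 * lam * Mb) \<longlongrightarrow> 0) (at_right (0::real))"
    by (auto intro!: tendsto_eq_intros)
  ultimately have e0: "(err \<longlongrightarrow> 0) (at_right 0)" by (rule Lim_null_comparison)
  have "((\<lambda>lam. cc x y (1 - lam) + err lam) \<longlongrightarrow> ell x y + 0) (at_right 0)"
    by (intro tendsto_add cc_tendsto_r[OF xy] e0)
  moreover have "eventually (\<lambda>lam. cc x y (1 - lam) + err lam = kappa_lambda w lam x y / lam) (at_right 0)"
    using ev
  proof (rule eventually_mono)
    fix lam :: real assume l: "lam \<in> {0<..<1}"
    have "D \<noteq> 0" using D by simp
    then show "cc x y (1 - lam) + err lam = kappa_lambda w lam x y / lam"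
      unfolding cc_def err_def kappa_lambda_def D_def[symmetric] using l
      by (simp add: field_simps)
  qed
  ultimately show ?thesis by (simp add: tendsto_cong)
qed

end

theorem mainTheorem13:
  fixes w :: "'a::finite \<Rightarrow> 'a \<Rightarrow> real" and x y :: 'a
  assumes "weighted_simple_graph w"
    and "connected_graph w"
    and "x \<noteq> y"
  shows "kappa_lower w x y = kappa_upper w x y \<and> kappa_upper w x y = ereal (kappa_LLY w x y)"
proof -
  interpret wgraph w
    using assms by unfold_locales blast+
  have t: "((\<lambda>lam. ereal (kappa_lambda w lam x y / lam)) \<longlongrightarrow> ereal (ell x y)) (at_right 0)"
    using kl_tendsto[OF assms(3)] by (rule tendsto_ereal)
  have "kappa_lower w x y = ereal (ell x y)" unfolding kappa_lower_def
    by (rule lim_imp_Liminf[OF _ t]) simp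
  moreover have "kappa_upper w x y = ereal (ell x y)" unfolding kappa_upper_def
    by (rule lim_imp_Limsup[OF _ t]) simp
  ultimately show ?thesis using LLY_eq[OF assms(3)] by simp
qed

end
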